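(* Let $M\ge4$. If a coarsely bottlenecked graph $G$ has a skeleton $G_{\lambda,k}$ such that $G_{(\lambda,k)_{(2,2)}}$ contains an $M$-fat $H$ minor, then $G_{\lambda,k}$ contains an $(M+\frac M2-2)$-fat $H$ minor.
   Context: All graphs are connected (and unbounded); $d$ is the graph metric. Sets $X,Y$ are $r$-disjoint if $d(a,b)>r$ for all $a\in X,b\in Y$; $X$ is $k$-connected if any two of its points are joined by a finite sequence in $X$ with consecutive distances $\le k$; $N_r(S)=\{y:d(s,y)<r\text{ for some }s\in S\}$. $G$ is $M$-fat $n$-bottlenecked if for any two connected $M$-disjoint subgraphs $X,Y$ there is $S\subset V(G)\setminus(V(X)\cup V(Y))$, $|S|=n$, such that every path from $X$ to $Y$ meets $N_M(S)$; coarsely bottlenecked means this holds for some $M,n$. $H$ is an $M$-fat minor of a graph $\Gamma$ if there are connected subgraphs $B_v$ ($v\in V(H)$) and paths $P_e$ ($e\in E(H)$), $P_e$ joining $B_u$ to $B_v$ for $e=uv$, any two of which are $M$-disjoint unless they correspond to an incident vertex–edge pair of $H$. Skeleton $\Gamma_{\lambda,k}$ of a connected graph $\Gamma$ (root $x_0$, scale $\lambda\ge1$, connectivity $k\ge1$): layers $A_{N,\lambda}=\{x: N\lambda<d(x,x_0)\le(N+1)\lambda\}$, $N\in\mathbb Z$; blocks are maximal $k$-connected subsets of layers; $\Gamma_{\lambda,k}$ has a vertex per block and an edge between two blocks iff an edge of $\Gamma$ joins them. $G_{(\lambda,k)_{(2,2)}}$ is the $(2,2)$-skeleton of the graph $G_{\lambda,k}$,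 rooted at the block containing the root of $G$. *)

theory Defs
  imports Main "HOL.Real"
begin

type_synonym 'a graph = "'a set \<times> ('a \<times> 'a) set"

definition verts :: "'a graph \<Rightarrow> 'a set" where "verts G = fst G"
definition edges :: "'a graph \<Rightarrow> ('a \<times> 'a) set" where "edges G = snd G"

definition graph :: "'a graph \<Rightarrow> bool" where
  "graph G \<longleftrightarrow> edges G \<subseteq> verts G \<times> verts G \<and> sym (edges G) \<and> irrefl (edges G)"

definition walk :: "'a graph \<Rightarrow> 'a list \<Rightarrow> bool" where
  "walk G xs \<longleftrightarrow> xs \<noteq> [] \<and> set xs \<subseteq> verts G \<and>
     (\<forall>i. Suc i < length xs \<longrightarrow> (xs ! i, xs ! Suc i) \<in> edges G)"

definition gpath :: "'a graph \<Rightarrow> 'a list \<Rightarrow> bool" where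
  "gpath G xs \<longleftrightarrow> walk G xs \<and> distinct xs"

definition connected_graph :: "'a graph \<Rightarrow> bool" where
  "connected_graph G \<longleftrightarrow> verts G \<noteq> {} \<and>
     (\<forall>x\<in>verts G. \<forall>y\<in>verts G. \<exists>xs. walk G xs \<and> hd xs = x \<and> last xs = y)"

definition gdist :: "'a graph \<Rightarrow> 'a \<Rightarrow> 'a \<Rightarrow> nat" where
  "gdist G x y = (LEAST n. \<exists>xs. walk G xs \<and> hd xs = x \<and> last xs = y \<and> length xs = Suc n)"

definition unbounded_graph :: "'a graph \<Rightarrow> bool" where
  "unbounded_graph G \<longleftrightarrow> (\<forall>x\<in>verts G. \<forall>r::real. \<exists>y\<in>verts G. real (gdist G x y) > r)"

definition subgraph :: "'a graph \<Rightarrow> 'a graph \<Rightarrow> bool" where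
  "subgraph G X \<longleftrightarrow> graph X \<and> verts X \<subseteq> verts G \<and> edges X \<subseteq> edges G"

definition r_disjoint :: "'a graph \<Rightarrow> real \<Rightarrow> 'a set \<Rightarrow> 'a set \<Rightarrow> bool" where
  "r_disjoint G r X Y \<longleftrightarrow> (\<forall>a\<in>X. \<forall>b\<in>Y. real (gdist G a b) > r)"

definition k_connected_set :: "'a graph \<Rightarrow> real \<Rightarrow> 'a set \<Rightarrow> bool" where
  "k_connected_set G k X \<longleftrightarrow> (\<forall>x\<in>X. \<forall>y\<in>X. \<exists>xs. xs \<noteq> [] \<and> set xs \<subseteq> X \<and> hd xs = x \<and> last xs = y \<and>
      (\<forall>i. Suc i < length xs \<longrightarrow> real (gdist G (xs ! i) (xs ! Suc i)) \<le> k))"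

definition nbhd :: "'a graph \<Rightarrow> real \<Rightarrow> 'a set \<Rightarrow> 'a set" where
  "nbhd G r S = {y \<in> verts G. \<exists>s\<in>S. real (gdist G s y) < r}"

definition fat_bottlenecked :: "'a graph \<Rightarrow> real \<Rightarrow> nat \<Rightarrow> bool" where
  "fat_bottlenecked G M n \<longleftrightarrow>
     (\<forall>X Y. subgraph G X \<and> connected_graph X \<and> subgraph G Y \<and> connected_graph Y \<and>
        r_disjoint G M (verts X) (verts Y) \<longrightarrow>
        (\<exists>S. finite S \<and> card S = n \<and> S \<subseteq> verts G - (verts X \<union> verts Y) \<and>
           (\<forall>xs. gpath G xs \<and> hd xs \<in> verts X \<and> last xs \<in> verts Y \<longrightarrow>
                set xs \<inter> nbhd G M S \<noteq> {})))"

definition coarsely_bottlenecked :: "'a graph \<Rightarrow> bool" where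
  "coarsely_bottlenecked G \<longleftrightarrow> (\<exists>M n. fat_bottlenecked G M n)"

definition layer :: "'a graph \<Rightarrow> 'a \<Rightarrow> real \<Rightarrow> int \<Rightarrow> 'a set" where
  "layer G x0 lam N = {x \<in> verts G. of_int N * lam < real (gdist G x0 x) \<and>
                                     real (gdist G x0 x) \<le> (of_int N + 1) * lam}"

definition is_block :: "'a graph \<Rightarrow> 'a \<Rightarrow> real \<Rightarrow> real \<Rightarrow> 'a set \<Rightarrow> bool" where
  "is_block G x0 lam k B \<longleftrightarrow> (\<exists>N. B \<subseteq> layer G x0 lam N \<and> B \<noteq> {} \<and> k_connected_set G k B \<and>
      (\<forall>B'. B \<subseteq> B' \<and> B' \<subseteq> layer G x0 lam N \<and> k_connected_set G k B' \<longrightarrow> B' = B))"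

definition skeleton :: "'a graph \<Rightarrow> 'a \<Rightarrow> real \<Rightarrow> real \<Rightarrow> 'a set graph" where
  "skeleton G x0 lam k =
     ({B. is_block G x0 lam k B},
      {(B, B'). is_block G x0 lam k B \<and> is_block G x0 lam k B' \<and> B \<noteq> B' \<and>
                (\<exists>x\<in>B. \<exists>y\<in>B'. (x, y) \<in> edges G)})"

definition skel_root :: "'a graph \<Rightarrow> 'a \<Rightarrow> real \<Rightarrow> real \<Rightarrow> 'a set" where
  "skel_root G x0 lam k = (THE B. is_block G x0 lam k B \<and> x0 \<in> B)"

definition skeleton22 :: "'a graph \<Rightarrow> 'a \<Rightarrow> real \<Rightarrow> real \<Rightarrow> 'a set set graph" where
  "skeleton22 G x0 lam k = skeleton (skeleton G x0 lam k) (skel_root G x0 lam k) 2 2"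

definition uedges :: "'b graph \<Rightarrow> 'b set set" where
  "uedges H = {{u, v} | u v. (u, v) \<in> edges H}"

definition fat_minor :: "'b graph \<Rightarrow> 'a graph \<Rightarrow> real \<Rightarrow> bool" where
  "fat_minor H \<Gamma> M \<longleftrightarrow> (\<exists>(Bs :: 'b \<Rightarrow> 'a graph) (P :: 'b set \<Rightarrow> 'a list).
     (\<forall>v\<in>verts H. subgraph \<Gamma> (Bs v) \<and> connected_graph (Bs v)) \<and>
     (\<forall>e\<in>uedges H. gpath \<Gamma> (P e) \<and>
        (\<exists>u v. e = {u, v} \<and> (u, v) \<in> edges H \<and> hd (P e) \<in> verts (Bs u) \<and> last (P e) \<in> verts (Bs v))) \<and>
     (\<forall>u\<in>verts H. \<forall>v\<in>verts H. u \<noteq> v \<longrightarrow> r_disjoint \<Gamma> M (verts (Bs u)) (verts (Bs v))) \<and>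
     (\<forall>e\<in>uedges H. \<forall>e'\<in>uedges H. e \<noteq> e' \<longrightarrow> r_disjoint \<Gamma> M (set (P e)) (set (P e'))) \<and>
     (\<forall>v\<in>verts H. \<forall>e\<in>uedges H. v \<notin> e \<longrightarrow> r_disjoint \<Gamma> M (verts (Bs v)) (set (P e))))"

end

theory Submission
  imports Defs
begin


lemma walk_alt: "walk G xs \<longleftrightarrow> xs \<noteq> [] \<and> set xs \<subseteq> verts G \<and> successively (\<lambda>a b. (a,b) \<in> edges G) xs"
  unfolding walk_def successively_conv_nth by blast

lemma kconn_alt: "k_connected_set G k X \<longleftrightarrow> (\<forall>x\<in>X. \<forall>y\<in>X. \<exists>xs. xs \<noteq> [] \<and> set xs \<subseteq> X \<and> hd xs = x \<and> last xs = y \<and>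
      successively (\<lambda>a b. real (gdist G a b) \<le> k) xs)"
  unfolding k_connected_set_def successively_conv_nth by blast

lemma walk_single[simp]: "walk G [x] \<longleftrightarrow> x \<in> verts G"
  by (simp add: walk_alt)

lemma walk_CC[simp]: "walk G (x # y # r) \<longleftrightarrow> x \<in> verts G \<and> (x,y) \<in> edges G \<and> walk G (y # r)"
  by (auto simp: walk_alt)

lemma walk_append: "walk G xs \<Longrightarrow> walk G ys \<Longrightarrow> (last xs, hd ys) \<in> edges G \<Longrightarrow> walk G (xs @ ys)"
  by (auto simp: walk_alt successively_append_iff)

lemma walk_join: "walk G xs \<Longrightarrow> walk G ys \<Longrightarrow> last xs = hd ys \<Longrightarrow> walk G (xs @ tl ys)"
proof (induction xs)
  case Nil then show ?case by (simp add: walk_def)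
next
  case (Cons x r)
  show ?case
  proof (cases r)
    case Nil
    then have "ys = x # tl ys" using Cons.prems by (metis last_ConsL list.collapse walk_def)
    then show ?thesis using Cons.prems Nil by simp
  next
    case (Cons y r')
    then have "walk G (r @ tl ys)" using Cons.IH Cons.prems by simp
    then show ?thesis using Cons.prems Cons by simp
  qed
qed

lemma walk_suffix: "walk G (xs @ ys) \<Longrightarrow> ys \<noteq> [] \<Longrightarrow> walk G ys"
  by (auto simp: walk_alt successively_append_iff)

lemma walk_rev: "graph G \<Longrightarrow> walk G xs \<Longrightarrow> walk G (rev xs)"
  by (auto simp: walk_alt graph_def sym_def elim!: successively_mono)

lemma walk_hd_in: "walk G xs \<Longrightarrow> hd xs \<in> verts G"
  by (auto simp: walk_alt)
lemma walk_last_in: "walk G xs \<Longrightarrow> last xs \<in> verts G"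
  by (auto simp: walk_alt)

lemma walk_to_path:
  assumes "walk G xs"
  shows "\<exists>ys. gpath G ys \<and> hd ys = hd xs \<and> last ys = last xs \<and> set ys \<subseteq> set xs"
  using assms
proof (induction xs)
  case Nil then show ?case by (simp add: walk_def)
next
  case (Cons x rest)
  show ?case
  proof (cases rest)
    case Nil then show ?thesis using Cons.prems by (intro exI[of _ "[x]"]) (auto simp: gpath_def)
  next
    case (Cons y r)
    then have w: "walk G rest" "(x,y) \<in> edges G" "x \<in> verts G" using Cons.prems by auto
    obtain ys where ys: "gpath G ys" "hd ys = hd rest" "last ys = last rest" "set ys \<subseteq> set rest"
      using Cons.IH w(1) by blast
    have ysne: "ys \<noteq> []" using ys(1) by (simp add: gpath_def walk_def)
    show ?thesis
    proof (cases "x \<in> set ys")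
      case True
      then obtain a b where ab: "ys = a @ x # b" by (meson split_list)
      have "walk G (x # b)" using ys(1) ab walk_suffix[of G a "x # b"] unfolding gpath_def by blast
      moreover have "distinct (x # b)" using ys(1) ab unfolding gpath_def by simp
      ultimately have g: "gpath G (x # b)" unfolding gpath_def by blast
      have l: "last (x # b) = last (x # rest)" using ab ys(3) Cons by simp
      have "set (x # b) \<subseteq> set (x # rest)" using ab ys(4) by auto
      then have "gpath G (x#b) \<and> hd (x#b) = hd (x#rest) \<and> last (x#b) = last (x#rest) \<and> set (x#b) \<subseteq> set (x#rest)"
        using g l by simp
      then show ?thesis by blast
    next
      case False
      obtain z zs where zs: "ys = z # zs" using ysne by (cases ys) auto
      have "z = y" using ys(2) zs Cons by simp
      then have "walk G (x # ys)" using w ys(1) zs by (simp add: gpath_def)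
      then have g: "gpath G (x # ys)" using False ys(1) by (simp add: gpath_def)
      have "last (x # ys) = last (x # rest)" using ys(3) ysne Cons by simp
      moreover have "set (x # ys) \<subseteq> set (x # rest)" using ys(4) by auto
      ultimately show ?thesis using g by (metis list.sel(1))
    qed
  qed
qed

definition wp where "wp G a b n \<longleftrightarrow> (\<exists>xs. walk G xs \<and> hd xs = a \<and> last xs = b \<and> length xs = Suc n)"

lemma gdist_wp: "gdist G a b = (LEAST n. wp G a b n)"
  unfolding gdist_def wp_def by simp

lemma gdist_le: "walk G xs \<Longrightarrow> hd xs = a \<Longrightarrow> last xs = b \<Longrightarrow> gdist G a b \<le> length xs - 1"
  unfolding gdist_wp by (rule Least_le) (auto simp: wp_def walk_def)

lemma gdist_walk: "walk G xs \<Longrightarrow> hd xs = a \<Longrightarrow> last xs = b \<Longrightarrow>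
   \<exists>ys. walk G ys \<and> hd ys = a \<and> last ys = b \<and> length ys = Suc (gdist G a b)"
proof -
  assume "walk G xs" "hd xs = a" "last xs = b"
  then have "wp G a b (length xs - 1)" unfolding wp_def by (intro exI[of _ xs]) (auto simp: walk_def)
  then have "wp G a b (gdist G a b)" unfolding gdist_wp by (rule LeastI)
  then show ?thesis unfolding wp_def by blast
qed

lemma gdist_sym: "graph G \<Longrightarrow> gdist G a b = gdist G b a"
proof -
  assume g: "graph G"
  have "wp G a b = wp G b a"
  proof (intro ext iffI)
    fix n assume "wp G a b n"
    then obtain xs where "walk G xs" "hd xs = a" "last xs = b" "length xs = Suc n" unfolding wp_def by blast
    then show "wp G b a n" unfolding wp_def using walk_rev[OF g]
      by (intro exI[of _ "rev xs"]) (auto simp: hd_rev last_rev walk_def)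
  next
    fix n assume "wp G b a n"
    then obtain xs where "walk G xs" "hd xs = b" "last xs = a" "length xs = Suc n" unfolding wp_def by blast
    then show "wp G a b n" unfolding wp_def using walk_rev[OF g]
      by (intro exI[of _ "rev xs"]) (auto simp: hd_rev last_rev walk_def)
  qed
  then show ?thesis by (simp add: gdist_wp)
qed

lemma gdist_edge: "(a,b) \<in> edges G \<Longrightarrow> graph G \<Longrightarrow> gdist G a b \<le> 1"
  using gdist_le[of G "[a,b]" a b] by (auto simp: graph_def)

lemma gdist_refl: "a \<in> verts G \<Longrightarrow> gdist G a a = 0"
  using gdist_le[of G "[a]" a a] by simp

lemma conn_walk: "connected_graph G \<Longrightarrow> a \<in> verts G \<Longrightarrow> b \<in> verts G \<Longrightarrow>
   \<exists>ys. walk G ys \<and> hd ys = a \<and> last ys = b \<and> length ys = Suc (gdist G a b)"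
proof -
  assume "connected_graph G" "a \<in> verts G" "b \<in> verts G"
  then obtain xs where "walk G xs" "hd xs = a" "last xs = b" unfolding connected_graph_def by blast
  then show ?thesis by (rule gdist_walk)
qed

lemma gdist_tri:
  assumes "connected_graph G" "a \<in> verts G" "b \<in> verts G" "c \<in> verts G"
  shows "gdist G a c \<le> gdist G a b + gdist G b c"
proof -
  obtain xs where xs: "walk G xs" "hd xs = a" "last xs = b" "length xs = Suc (gdist G a b)"
    using conn_walk assms by metis
  obtain ys where ys: "walk G ys" "hd ys = b" "last ys = c" "length ys = Suc (gdist G b c)"
    using conn_walk assms by metis
  have w: "walk G (xs @ tl ys)" using walk_join[OF xs(1) ys(1)] xs ys by simp
  have "hd (xs @ tl ys) = a" using xs by (auto simp: walk_def)
  moreover have "last (xs @ tl ys) = c"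
  proof (cases "tl ys = []")
    case True
    then have "ys = [hd ys]" using ys(1) by (metis list.collapse walk_def)
    then show ?thesis using True xs ys by (metis last_ConsL append.right_neutral)
  next
    case False
    then show ?thesis using ys by (metis last_appendR last_tl)
  qed
  ultimately have "gdist G a c \<le> length (xs @ tl ys) - 1" by (rule gdist_le[OF w])
  then show ?thesis using xs ys by simp
qed



lemma succ_join: "successively P xs \<Longrightarrow> successively P ys \<Longrightarrow> xs \<noteq> [] \<Longrightarrow> ys \<noteq> [] \<Longrightarrow> last xs = hd ys
   \<Longrightarrow> successively P (xs @ tl ys)"
proof -
  assume a: "successively P xs" "successively P ys" "xs \<noteq> []" "ys \<noteq> []" "last xs = hd ys"
  obtain y r where yr: "ys = y # r" using a(4) by (cases ys) auto
  show ?thesis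
  proof (cases r)
    case Nil then show ?thesis using a yr by simp
  next
    case (Cons z r')
    have "P y z" using a(2) yr Cons by simp
    moreover have "successively P r" using a(2) yr Cons by simp
    ultimately show ?thesis using a yr Cons by (auto simp: successively_append_iff)
  qed
qed

lemma succ_prefix: "successively P xs \<Longrightarrow> w \<in> set xs \<Longrightarrow>
  \<exists>as. successively P (as @ [w]) \<and> set (as @ [w]) \<subseteq> set xs \<and> hd (as @ [w]) = hd xs"
proof -
  assume a: "successively P xs" "w \<in> set xs"
  obtain as bs where ab: "xs = as @ w # bs" using a(2) by (meson split_list)
  have "successively P (as @ [w])" using a(1) ab
    by (auto simp: successively_append_iff)
  moreover have "hd (as @ [w]) = hd xs" using ab by (cases as) auto
  ultimately show ?thesis using ab by (intro exI[of _ as]) auto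
qed

definition kch where "kch G k xs \<longleftrightarrow> successively (\<lambda>a b. real (gdist G a b) \<le> k) xs"

definition lcomp where "lcomp G x0 lam k N x =
  {y. \<exists>xs. xs \<noteq> [] \<and> set xs \<subseteq> layer G x0 lam N \<and> hd xs = x \<and> last xs = y \<and> kch G k xs}"

lemma kconn_alt2: "k_connected_set G k X \<longleftrightarrow> (\<forall>x\<in>X. \<forall>y\<in>X. \<exists>xs. xs \<noteq> [] \<and> set xs \<subseteq> X \<and> hd xs = x \<and> last xs = y \<and> kch G k xs)"
  unfolding kconn_alt kch_def by blast

lemma layer_sub: "layer G x0 lam N \<subseteq> verts G"
  unfolding layer_def by auto

lemma layer_unique:
  assumes "lam > 0" "x \<in> layer G x0 lam N" "x \<in> layer G x0 lam N'"
  shows "N = N'"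
proof -
  let ?d = "real (gdist G x0 x)"
  have "of_int N * lam < ?d" "?d \<le> (of_int N' + 1) * lam" using assms(2,3) unfolding layer_def by blast+
  then have "of_int N * lam < (of_int N' + 1) * lam" by linarith
  then have "of_int N < (of_int N' + (1::real))" using mult_less_cancel_right_pos[OF assms(1)] by blast
  then have 1: "N < N' + 1" by linarith
  have "of_int N' * lam < ?d" "?d \<le> (of_int N + 1) * lam" using assms(2,3) unfolding layer_def by blast+
  then have "of_int N' * lam < (of_int N + 1) * lam" by linarith
  then have "of_int N' < (of_int N + (1::real))" using mult_less_cancel_right_pos[OF assms(1)] by blast
  then have 2: "N' < N + 1" by linarith
  show ?thesis using 1 2 by linarith
qed

lemma layer_ex:
  assumes "lam > 0" "x \<in> verts G"
  shows "\<exists>N. x \<in> layer G x0 lam N"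
proof -
  let ?d = "real (gdist G x0 x)"
  define N where "N = \<lceil>?d / lam\<rceil> - 1"
  have a: "of_int N < ?d / lam" unfolding N_def by linarith
  have b: "?d / lam \<le> of_int N + 1" unfolding N_def by linarith
  have "of_int N * lam < ?d" using a assms(1) by (simp add: pos_less_divide_eq)
  moreover have "?d \<le> (of_int N + 1) * lam" using b assms(1) by (simp add: pos_divide_le_eq)
  ultimately show ?thesis using assms(2) unfolding layer_def by blast
qed

lemma comp_sub: "lcomp G x0 lam k N x \<subseteq> layer G x0 lam N"
  unfolding lcomp_def by force

lemma comp_self: "x \<in> layer G x0 lam N \<Longrightarrow> x \<in> lcomp G x0 lam k N x"
  unfolding lcomp_def kch_def by (intro CollectI exI[of _ "[x]"]) auto

lemma comp_prefix:
  assumes "xs \<noteq> []" "set xs \<subseteq> layer G x0 lam N" "hd xs = x" "kch G k xs"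
  shows "set xs \<subseteq> lcomp G x0 lam k N x"
proof
  fix w assume "w \<in> set xs"
  then obtain as where as: "successively (\<lambda>a b. real (gdist G a b) \<le> k) (as @ [w])"
     "set (as @ [w]) \<subseteq> set xs" "hd (as @ [w]) = hd xs"
    using succ_prefix[OF assms(4)[unfolded kch_def]] by blast
  then show "w \<in> lcomp G x0 lam k N x" unfolding lcomp_def kch_def using assms
    by (intro CollectI exI[of _ "as @ [w]"]) auto
qed

lemma comp_kconn:
  assumes g: "graph G"
  shows "k_connected_set G k (lcomp G x0 lam k N x)"
  unfolding kconn_alt2
proof (intro ballI)
  fix y z assume y: "y \<in> lcomp G x0 lam k N x" and z: "z \<in> lcomp G x0 lam k N x"
  obtain cy where cy: "cy \<noteq> []" "set cy \<subseteq> layer G x0 lam N" "hd cy = x" "last cy = y" "kch G k cy"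
    using y unfolding lcomp_def by blast
  obtain cz where cz: "cz \<noteq> []" "set cz \<subseteq> layer G x0 lam N" "hd cz = x" "last cz = z" "kch G k cz"
    using z unfolding lcomp_def by blast
  have s1: "set cy \<subseteq> lcomp G x0 lam k N x" by (rule comp_prefix[OF cy(1-3) cy(5)])
  have s2: "set cz \<subseteq> lcomp G x0 lam k N x" by (rule comp_prefix[OF cz(1-3) cz(5)])
  have r: "kch G k (rev cy)" unfolding kch_def successively_rev
    using cy(5)[unfolded kch_def] by (rule successively_mono) (metis gdist_sym[OF g])
  have lr: "last (rev cy) = hd cz" using cy cz by (simp add: last_rev)
  have rne: "rev cy \<noteq> []" using cy(1) by simp
  have j: "kch G k (rev cy @ tl cz)" unfolding kch_def
    by (rule succ_join[OF r[unfolded kch_def] cz(5)[unfolded kch_def] rne cz(1) lr])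
  have "set (tl cz) \<subseteq> set cz" by (cases cz) auto
  then have "set (rev cy @ tl cz) \<subseteq> lcomp G x0 lam k N x" using s1 s2 by auto
  moreover have "hd (rev cy @ tl cz) = y" using cy by (simp add: hd_rev)
  moreover have "last (rev cy @ tl cz) = z"
  proof (cases "tl cz = []")
    case True
    then have "cz = [x]" using cz by (metis list.collapse)
    then show ?thesis using True cz cy by (simp add: last_rev)
  next
    case False
    then show ?thesis using cz by (metis last_appendR last_tl)
  qed
  ultimately show "\<exists>xs. xs \<noteq> [] \<and> set xs \<subseteq> lcomp G x0 lam k N x \<and> hd xs = y \<and> last xs = z \<and> kch G k xs"
    using j rne by (intro exI[of _ "rev cy @ tl cz"]) simp
qed

lemma block_comp:
  assumes g: "graph G" and x: "x \<in> layer G x0 lam N"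
  shows "is_block G x0 lam k (lcomp G x0 lam k N x)"
  unfolding is_block_def
proof (intro exI[of _ N] conjI allI impI)
  show "lcomp G x0 lam k N x \<subseteq> layer G x0 lam N" by (rule comp_sub)
  show "lcomp G x0 lam k N x \<noteq> {}" using comp_self[OF x] by blast
  show "k_connected_set G k (lcomp G x0 lam k N x)" by (rule comp_kconn[OF g])
  fix B' assume B': "lcomp G x0 lam k N x \<subseteq> B' \<and> B' \<subseteq> layer G x0 lam N \<and> k_connected_set G k B'"
  show "B' = lcomp G x0 lam k N x"
  proof
    show "B' \<subseteq> lcomp G x0 lam k N x"
    proof
      fix y assume y: "y \<in> B'"
      have "x \<in> B'" using B' comp_self[OF x] by blast
      then obtain xs where "xs \<noteq> []" "set xs \<subseteq> B'" "hd xs = x" "last xs = y" "kch G k xs"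
        using B' y unfolding kconn_alt2 by blast
      then show "y \<in> lcomp G x0 lam k N x" unfolding lcomp_def using B' by auto
    qed
  qed (use B' in blast)
qed

lemma block_eq_comp:
  assumes lam: "lam > 0" and g: "graph G" and B: "is_block G x0 lam k B" and xB: "x \<in> B"
    and x: "x \<in> layer G x0 lam N"
  shows "B = lcomp G x0 lam k N x"
proof -
  obtain N' where N': "B \<subseteq> layer G x0 lam N'" "B \<noteq> {}" "k_connected_set G k B"
    "\<forall>B'. B \<subseteq> B' \<and> B' \<subseteq> layer G x0 lam N' \<and> k_connected_set G k B' \<longrightarrow> B' = B"
    using B unfolding is_block_def by blast
  have "x \<in> layer G x0 lam N'" using N'(1) xB by blast
  then have "N' = N" using layer_unique[OF lam _ x] by blast
  have sub: "B \<subseteq> lcomp G x0 lam k N x"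
  proof
    fix y assume y: "y \<in> B"
    then obtain xs where "xs \<noteq> []" "set xs \<subseteq> B" "hd xs = x" "last xs = y" "kch G k xs"
      using N'(3) xB unfolding kconn_alt2 by blast
    then show "y \<in> lcomp G x0 lam k N x" unfolding lcomp_def using N'(1) \<open>N' = N\<close> by blast
  qed
  have "lcomp G x0 lam k N x = B"
    apply (rule N'(4)[rule_format])
    using sub comp_sub[of G x0 lam k N x] comp_kconn[OF g] \<open>N' = N\<close> by blast
  then show ?thesis by simp
qed

lemma block_ex:
  assumes "lam > 0" "graph G" "x \<in> verts G"
  shows "\<exists>B. is_block G x0 lam k B \<and> x \<in> B"
proof -
  obtain N where "x \<in> layer G x0 lam N" using layer_ex[OF assms(1,3), of x0] by blast
  then show ?thesis using block_comp[OF assms(2), of x x0 lam N k] comp_self[of x G x0 lam N k] by blast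
qed

lemma block_in_layer: "is_block G x0 lam k B \<Longrightarrow> \<exists>N. B \<subseteq> layer G x0 lam N"
  unfolding is_block_def by blast

lemma block_uniq:
  assumes "lam > 0" "graph G" "is_block G x0 lam k B" "is_block G x0 lam k B'" "x \<in> B" "x \<in> B'"
  shows "B = B'"
proof -
  obtain N where N: "B \<subseteq> layer G x0 lam N" using block_in_layer[OF assms(3)] by blast
  then have x: "x \<in> layer G x0 lam N" using assms(5) by blast
  show ?thesis using block_eq_comp[OF assms(1,2,3,5) x] block_eq_comp[OF assms(1,2,4,6) x] by simp
qed

lemma block_same:
  assumes "lam > 0" "graph G" "x \<in> layer G x0 lam N" "y \<in> layer G x0 lam N"
    "real (gdist G x y) \<le> k" "is_block G x0 lam k B" "x \<in> B"
  shows "y \<in> B"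
proof -
  have "B = lcomp G x0 lam k N x" by (rule block_eq_comp[OF assms(1,2,6,7,3)])
  moreover have "y \<in> lcomp G x0 lam k N x" unfolding lcomp_def kch_def using assms
    by (intro CollectI exI[of _ "[x,y]"]) auto
  ultimately show ?thesis by simp
qed

lemma block_verts: "is_block G x0 lam k B \<Longrightarrow> B \<subseteq> verts G"
  using layer_sub[of G x0 lam] unfolding is_block_def by blast

lemma block_ne: "is_block G x0 lam k B \<Longrightarrow> B \<noteq> {}"
  unfolding is_block_def by blast

lemma block_kconn: "is_block G x0 lam k B \<Longrightarrow> k_connected_set G k B"
  unfolding is_block_def by blast



lemma skel_verts: "verts (skeleton G x0 lam k) = {B. is_block G x0 lam k B}"
  unfolding skeleton_def verts_def by simp

lemma skel_edges: "(B, B') \<in> edges (skeleton G x0 lam k) \<longleftrightarrow>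
   is_block G x0 lam k B \<and> is_block G x0 lam k B' \<and> B \<noteq> B' \<and> (\<exists>x\<in>B. \<exists>y\<in>B'. (x, y) \<in> edges G)"
  unfolding skeleton_def edges_def by simp

lemma skel_graph:
  assumes g: "graph G"
  shows "graph (skeleton G x0 lam k)"
proof -
  have s: "(y, x) \<in> edges G" if "(x, y) \<in> edges G" for x y
    using g that unfolding graph_def sym_def by blast
  show ?thesis unfolding graph_def
  proof (intro conjI)
    show "edges (skeleton G x0 lam k) \<subseteq> verts (skeleton G x0 lam k) \<times> verts (skeleton G x0 lam k)"
      using skel_edges[of _ _ G x0 lam k] skel_verts[of G x0 lam k] by auto
    show "sym (edges (skeleton G x0 lam k))" unfolding sym_def
      using skel_edges[of _ _ G x0 lam k] s by metis
    show "irrefl (edges (skeleton G x0 lam k))" unfolding irrefl_def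
      using skel_edges[of _ _ G x0 lam k] by blast
  qed
qed

lemma skel_walk:
  assumes lam: "lam > 0" and g: "graph G" and w: "walk G xs"
  shows "\<And>B B'. is_block G x0 lam k B \<Longrightarrow> hd xs \<in> B \<Longrightarrow> is_block G x0 lam k B' \<Longrightarrow> last xs \<in> B' \<Longrightarrow>
    \<exists>Q. walk (skeleton G x0 lam k) Q \<and> hd Q = B \<and> last Q = B'"
  using w
proof (induction xs)
  case Nil then show ?case by (simp add: walk_def)
next
  case (Cons x rest)
  show ?case
  proof (cases rest)
    case Nil
    then have "B = B'" using Cons.prems block_uniq[OF lam g, of x0 k B B' x] by simp
    then show ?thesis using Cons.prems by (intro exI[of _ "[B]"]) (simp add: skel_verts)
  next
    case (Cons y r)
    have wr: "walk G rest" and xy: "(x, y) \<in> edges G" and yv: "y \<in> verts G"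
      using Cons.prems(5) \<open>rest = y # r\<close> by (auto simp: walk_def)
    obtain By where By: "is_block G x0 lam k By" "y \<in> By" using block_ex[OF lam g yv, of x0 k] by blast
    have "last rest \<in> B'" using Cons.prems \<open>rest = y # r\<close> by simp
    then obtain Q where Q: "walk (skeleton G x0 lam k) Q" "hd Q = By" "last Q = B'"
      using Cons.IH[OF By(1) _ Cons.prems(3) _ wr] By(2) \<open>rest = y # r\<close> by auto
    show ?thesis
    proof (cases "B = By")
      case True then show ?thesis using Q by blast
    next
      case False
      have x: "x \<in> B" using Cons.prems by simp
      have e: "(B, By) \<in> edges (skeleton G x0 lam k)" unfolding skel_edges
        using False By Cons.prems(1) x xy by blast
      have qne: "Q \<noteq> []" using Q(1) by (simp add: walk_def)
      then have "Q = By # tl Q" using Q(2) by (metis list.collapse)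
      then have "walk (skeleton G x0 lam k) (B # Q)"
        using Q(1) e Cons.prems(1) by (metis walk_CC mem_Collect_eq skel_verts)
      moreover have "last (B # Q) = B'" using Q qne by simp
      ultimately show ?thesis by (intro exI[of _ "B # Q"]) simp
    qed
  qed
qed

lemma skel_conn:
  assumes lam: "lam > 0" and g: "graph G" and c: "connected_graph G"
  shows "connected_graph (skeleton G x0 lam k)"
  unfolding connected_graph_def
proof (intro conjI ballI)
  obtain x where x: "x \<in> verts G" using c unfolding connected_graph_def by blast
  then obtain B where "is_block G x0 lam k B" using block_ex[OF lam g x, of x0 k] by blast
  then show "verts (skeleton G x0 lam k) \<noteq> {}" by (auto simp: skel_verts)
next
  fix B B' assume B: "B \<in> verts (skeleton G x0 lam k)" and B': "B' \<in> verts (skeleton G x0 lam k)"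
  then have bB: "is_block G x0 lam k B" and bB': "is_block G x0 lam k B'" by (auto simp: skel_verts)
  obtain a where a: "a \<in> B" using block_ne[OF bB] by blast
  obtain b where b: "b \<in> B'" using block_ne[OF bB'] by blast
  have av: "a \<in> verts G" using block_verts[OF bB] a by blast
  have bv: "b \<in> verts G" using block_verts[OF bB'] b by blast
  obtain xs where xs: "walk G xs" "hd xs = a" "last xs = b" using c av bv unfolding connected_graph_def by blast
  show "\<exists>xs. walk (skeleton G x0 lam k) xs \<and> hd xs = B \<and> last xs = B'"
    using skel_walk[OF lam g xs(1) bB _ bB'] xs a b by blast
qed

lemma skel_root_block:
  assumes lam: "lam > 0" and g: "graph G" and x0: "x0 \<in> verts G"
  shows "is_block G x0 lam k (skel_root G x0 lam k) \<and> x0 \<in> skel_root G x0 lam k"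
proof -
  obtain B where B: "is_block G x0 lam k B" "x0 \<in> B" using block_ex[OF lam g x0, of x0 k] by blast
  have "\<exists>!B. is_block G x0 lam k B \<and> x0 \<in> B"
    using B block_uniq[OF lam g, of x0 k _ _ x0] by blast
  then show ?thesis unfolding skel_root_def by (rule theI')
qed



definition lift :: "'a graph \<Rightarrow> 'a set \<Rightarrow> 'a set" where
  "lift K W = {y. \<exists>x\<in>W. x = y \<or> (x, y) \<in> edges K}"

lemma lift_sub: "W \<subseteq> lift K W"
  unfolding lift_def by blast

lemma lift_verts: "graph K \<Longrightarrow> W \<subseteq> verts K \<Longrightarrow> lift K W \<subseteq> verts K"
  unfolding lift_def graph_def by blast

lemma graph_sym: "graph K \<Longrightarrow> (x, y) \<in> edges K \<Longrightarrow> (y, x) \<in> edges K"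
  unfolding graph_def sym_def by blast

lemma graph_ev: "graph K \<Longrightarrow> (x, y) \<in> edges K \<Longrightarrow> x \<in> verts K \<and> y \<in> verts K"
  unfolding graph_def by blast

lemma join_hd_last: "xs \<noteq> [] \<Longrightarrow> ys \<noteq> [] \<Longrightarrow> last xs = hd ys \<Longrightarrow>
   hd (xs @ tl ys) = hd xs \<and> last (xs @ tl ys) = last ys"
proof -
  assume a: "xs \<noteq> []" "ys \<noteq> []" "last xs = hd ys"
  show ?thesis
  proof (cases "tl ys = []")
    case True
    then have "ys = [hd ys]" using a(2) by (metis list.collapse)
    then show ?thesis using True a by (metis append.right_neutral last_ConsL)
  next
    case False
    then show ?thesis using a by (metis hd_append2 last_appendR last_tl)
  qed
qed

lemma walk_join3:
  assumes "walk K xs" "walk K ys" "last xs = hd ys"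
  shows "walk K (xs @ tl ys) \<and> hd (xs @ tl ys) = hd xs \<and> last (xs @ tl ys) = last ys \<and>
    set (xs @ tl ys) \<subseteq> set xs \<union> set ys \<and> length (xs @ tl ys) = length xs + length ys - 1"
proof -
  have ne: "xs \<noteq> []" "ys \<noteq> []" using assms by (auto simp: walk_def)
  have "set (tl ys) \<subseteq> set ys" by (cases ys) auto
  moreover have "length (xs @ tl ys) = length xs + length ys - 1" using ne by (cases ys) auto
  ultimately show ?thesis using walk_join[OF assms] join_hd_last[OF ne assms(3)] ne by auto
qed

lemma walk_short:
  assumes "graph K" "connected_graph K" "x \<in> verts K" "z \<in> verts K" "gdist K x z \<le> 2"
  shows "\<exists>ws. walk K ws \<and> hd ws = x \<and> last ws = z \<and> set ws \<subseteq> {x, z} \<union> {m. (x, m) \<in> edges K}"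
proof -
  obtain ws where ws: "walk K ws" "hd ws = x" "last ws = z" "length ws = Suc (gdist K x z)"
    using conn_walk[OF assms(2,3,4)] by blast
  have "length ws \<le> 3" using ws(4) assms(5) by simp
  have sub: "set ws \<subseteq> {x, z} \<union> {m. (x, m) \<in> edges K}"
  proof (cases ws)
    case Nil then show ?thesis using ws by (simp add: walk_def)
  next
    case (Cons a r1)
    show ?thesis
    proof (cases r1)
      case Nil then show ?thesis using ws Cons by simp
    next
      case (Cons b r2)
      show ?thesis
      proof (cases r2)
        case Nil then show ?thesis using ws \<open>ws = a # r1\<close> Cons by simp
      next
        case (Cons c r3)
        then have "r3 = []" using \<open>length ws \<le> 3\<close> \<open>ws = a # r1\<close> \<open>r1 = b # r2\<close> by simp
        then show ?thesis using ws \<open>ws = a # r1\<close> \<open>r1 = b # r2\<close> Cons by simp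
      qed
    qed
  qed
  then show ?thesis using ws by blast
qed

lemma chain_lift:
  assumes g: "graph K" and c: "connected_graph K" and W: "W \<subseteq> verts K"
  shows "xs \<noteq> [] \<Longrightarrow> set xs \<subseteq> W \<Longrightarrow> kch K 2 xs \<Longrightarrow>
    \<exists>ws. walk K ws \<and> hd ws = hd xs \<and> last ws = last xs \<and> set ws \<subseteq> lift K W"
proof (induction xs)
  case Nil then show ?case by simp
next
  case (Cons x rest)
  show ?case
  proof (cases rest)
    case Nil
    then show ?thesis using Cons.prems W lift_sub[of W K] by (intro exI[of _ "[x]"]) auto
  next
    case (Cons y r)
    have k: "kch K 2 rest" "real (gdist K x y) \<le> 2" using Cons.prems(3) \<open>rest = y # r\<close> by (auto simp: kch_def)
    obtain ws where ws: "walk K ws" "hd ws = hd rest" "last ws = last rest" "set ws \<subseteq> lift K W"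
      using Cons.IH k(1) Cons.prems \<open>rest = y # r\<close> by auto
    have xv: "x \<in> verts K" "y \<in> verts K" using Cons.prems W \<open>rest = y # r\<close> by auto
    have "gdist K x y \<le> 2" using k(2) by simp
    then obtain vs where vs: "walk K vs" "hd vs = x" "last vs = y" "set vs \<subseteq> {x, y} \<union> {m. (x, m) \<in> edges K}"
      using walk_short[OF g c xv] by blast
    have "set vs \<subseteq> lift K W" using vs(4) Cons.prems(2) \<open>rest = y # r\<close> unfolding lift_def by auto
    moreover have "last vs = hd ws" using vs ws \<open>rest = y # r\<close> by simp
    ultimately show ?thesis using walk_join3[OF vs(1) ws(1)] ws vs Cons.prems \<open>rest = y # r\<close>
      by (intro exI[of _ "vs @ tl ws"]) auto
  qed
qed

lemma edge_walk:
  assumes "graph K" "x \<in> verts K" "x = y \<or> (x, y) \<in> edges K"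
  shows "\<exists>ws. walk K ws \<and> hd ws = x \<and> last ws = y \<and> set ws \<subseteq> {x, y} \<and> length ws \<le> 2"
proof (cases "x = y")
  case True then show ?thesis using assms by (intro exI[of _ "[x]"]) auto
next
  case False
  then have "(x, y) \<in> edges K" using assms by blast
  then show ?thesis using assms graph_ev[OF assms(1)] by (intro exI[of _ "[x, y]"]) auto
qed

lemma lift_conn:
  assumes g: "graph K" and c: "connected_graph K" and W: "W \<subseteq> verts K" and kc: "k_connected_set K 2 W"
    and a: "a \<in> lift K W" and b: "b \<in> lift K W"
  shows "\<exists>ws. walk K ws \<and> hd ws = a \<and> last ws = b \<and> set ws \<subseteq> lift K W"
proof -
  obtain x where x: "x \<in> W" "x = a \<or> (x, a) \<in> edges K" using a unfolding lift_def by blast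
  obtain z where z: "z \<in> W" "z = b \<or> (z, b) \<in> edges K" using b unfolding lift_def by blast
  obtain xs where xs: "xs \<noteq> []" "set xs \<subseteq> W" "hd xs = x" "last xs = z" "kch K 2 xs"
    using kc x(1) z(1) unfolding kconn_alt2 by blast
  obtain ws where ws: "walk K ws" "hd ws = x" "last ws = z" "set ws \<subseteq> lift K W"
    using chain_lift[OF g c W xs(1,2,5)] xs by auto
  have av: "a \<in> verts K" using lift_verts[OF g W] a by blast
  have "a = x \<or> (a, x) \<in> edges K" using x(2) graph_sym[OF g] by blast
  then obtain w1 where w1: "walk K w1" "hd w1 = a" "last w1 = x" "set w1 \<subseteq> {a, x}"
    using edge_walk[OF g av] by blast
  have zv: "z \<in> verts K" using W z by blast
  obtain w3 where w3: "walk K w3" "hd w3 = z" "last w3 = b" "set w3 \<subseteq> {z, b}"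
    using edge_walk[OF g zv z(2)] by blast
  have j1: "walk K (w1 @ tl ws) \<and> hd (w1 @ tl ws) = a \<and> last (w1 @ tl ws) = z \<and> set (w1 @ tl ws) \<subseteq> lift K W"
    using walk_join3[OF w1(1) ws(1)] w1 ws a lift_sub[of W K] x(1) by auto
  have s3: "set w3 \<subseteq> lift K W" using w3(4) b lift_sub[of W K] z(1) by blast
  have j2: "walk K ((w1 @ tl ws) @ tl w3) \<and> hd ((w1 @ tl ws) @ tl w3) = a \<and> last ((w1 @ tl ws) @ tl w3) = b
      \<and> set ((w1 @ tl ws) @ tl w3) \<subseteq> lift K W"
    using walk_join3[of K "w1 @ tl ws" w3] j1 w3 s3 by auto
  then show ?thesis by blast
qed



lemma lift_chain:
  assumes g: "graph K" and c: "connected_graph K"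
  shows "walk (skeleton K r 2 2) Q \<Longrightarrow> a \<in> lift K (hd Q) \<Longrightarrow> b \<in> lift K (last Q) \<Longrightarrow>
    \<exists>ws. walk K ws \<and> hd ws = a \<and> last ws = b \<and> set ws \<subseteq> \<Union>(lift K ` set Q)"
proof (induction Q arbitrary: a)
  case Nil then show ?case by (simp add: walk_def)
next
  case (Cons W rest)
  have bW: "is_block K r 2 2 W" using Cons.prems(1) by (auto simp: walk_def skel_verts)
  have Wv: "W \<subseteq> verts K" by (rule block_verts[OF bW])
  have kW: "k_connected_set K 2 W" by (rule block_kconn[OF bW])
  show ?case
  proof (cases rest)
    case Nil
    then have "b \<in> lift K W" using Cons.prems by simp
    then obtain ws where "walk K ws" "hd ws = a" "last ws = b" "set ws \<subseteq> lift K W"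
      using lift_conn[OF g c Wv kW, of a b] Cons.prems by auto
    then show ?thesis by (intro exI[of _ ws]) auto
  next
    case (Cons W' rest')
    have e: "(W, W') \<in> edges (skeleton K r 2 2)" and wr: "walk (skeleton K r 2 2) rest"
      using Cons.prems(1) \<open>rest = W' # rest'\<close> by auto
    obtain p q where pq: "p \<in> W" "q \<in> W'" "(p, q) \<in> edges K" using e unfolding skel_edges by blast
    obtain w1 where w1: "walk K w1" "hd w1 = a" "last w1 = p" "set w1 \<subseteq> lift K W"
      using lift_conn[OF g c Wv kW, of a p] Cons.prems(2) pq(1) lift_sub[of W K] by auto
    have "q \<in> lift K (hd rest)" using pq(2) lift_sub[of W' K] \<open>rest = W' # rest'\<close> by auto
    moreover have "b \<in> lift K (last rest)" using Cons.prems(3) \<open>rest = W' # rest'\<close> by simp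
    ultimately obtain w2 where w2: "walk K w2" "hd w2 = q" "last w2 = b" "set w2 \<subseteq> \<Union>(lift K ` set rest)"
      using Cons.IH[OF wr] by blast
    have ne: "w1 \<noteq> []" "w2 \<noteq> []" using w1(1) w2(1) by (auto simp: walk_def)
    have "walk K (w1 @ w2)" using walk_append[OF w1(1) w2(1)] w1(3) w2(2) pq(3) by simp
    moreover have "hd (w1 @ w2) = a" "last (w1 @ w2) = b" using ne w1 w2 by auto
    moreover have "set (w1 @ w2) \<subseteq> \<Union>(lift K ` set (W # rest))" using w1(4) w2(4) by auto
    ultimately show ?thesis by blast
  qed
qed

lemma layer2:
  assumes "x \<in> verts K"
  shows "x \<in> layer K r 2 (int ((gdist K r x + 1) div 2) - 1)"
proof -
  define l where "l = gdist K r x"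
  define q where "q = (l + 1) div 2"
  have a: "2 * q \<le> l + 1" "l \<le> 2 * q" unfolding q_def by auto
  have b: "real (2 * q) \<le> real (l + 1)" "real l \<le> real (2 * q)" using a by (simp only: of_nat_le_iff)+
  have "of_int (int q - 1) * 2 < real l" using b by simp
  moreover have "real l \<le> (of_int (int q - 1) + 1) * 2" using b by simp
  ultimately show ?thesis using assms unfolding layer_def l_def q_def by simp
qed

lemma one_edge22:
  assumes g: "graph K" and B: "is_block K r 2 2 B" "p \<in> B" and B': "is_block K r 2 2 B'" "q \<in> B'"
    and e: "(p, q) \<in> edges K"
  shows "\<exists>Q. walk (skeleton K r 2 2) Q \<and> hd Q = B \<and> last Q = B' \<and> length Q \<le> 2"
proof (cases "B = B'")
  case True then show ?thesis using B by (intro exI[of _ "[B]"]) (auto simp: skel_verts)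
next
  case False
  have "(B, B') \<in> edges (skeleton K r 2 2)" unfolding skel_edges using B B' False e by blast
  then show ?thesis using B B' by (intro exI[of _ "[B, B']"]) (auto simp: skel_verts)
qed

lemma lev_step:
  assumes g: "graph K" and c: "connected_graph K" and r: "r \<in> verts K" and e: "(x, y) \<in> edges K"
  shows "gdist K r y \<le> gdist K r x + 1"
proof -
  have v: "x \<in> verts K" "y \<in> verts K" using graph_ev[OF g e] by auto
  have "gdist K r y \<le> gdist K r x + gdist K x y" by (rule gdist_tri[OF c r v(1) v(2)])
  then show ?thesis using gdist_edge[OF e g] by simp
qed

lemma par3: "((b::nat)+2) div 2 = (b+1) div 2 \<or> b div 2 = (b+1) div 2"
  by presburger
lemma lev3:
  fixes a b c :: nat
  assumes "b \<le> a + 1" "a \<le> b + 1" "c \<le> b + 1" "b \<le> c + 1"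
  shows "(a + 1) div 2 = (c + 1) div 2 \<or> (b + 1) div 2 = (a + 1) div 2 \<or> (b + 1) div 2 = (c + 1) div 2"
proof -
  have A: "a = b \<or> a = b + 1 \<or> a + 1 = b" using assms by arith
  have C: "c = b \<or> c = b + 1 \<or> c + 1 = b" using assms by arith
  show ?thesis
  proof (cases "a = b \<or> c = b")
    case True then show ?thesis by auto
  next
    case False
    then have A': "a = b + 1 \<or> a + 1 = b" and C': "c = b + 1 \<or> c + 1 = b" using A C by auto
    show ?thesis
    proof (cases "a = c")
      case True then show ?thesis by simp
    next
      case False
      then have "(a = b + 1 \<and> c + 1 = b) \<or> (a + 1 = b \<and> c = b + 1)" using A' C' by auto
      then show ?thesis
      proof
        assume h: "a = b + 1 \<and> c + 1 = b"
        then obtain d where "b = d + 1" by (cases b) auto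
        then have "a = d + 2" "c = d" "b = d + 1" using h by auto
        then show ?thesis using par3[of d] by auto
      next
        assume h: "a + 1 = b \<and> c = b + 1"
        then obtain d where "b = d + 1" by (cases b) auto
        then have "c = d + 2" "a = d" "b = d + 1" using h by auto
        then show ?thesis using par3[of d] by auto
      qed
    qed
  qed
qed

lemma two_step22:
  assumes g: "graph K" and c: "connected_graph K" and r: "r \<in> verts K"
    and e1: "(x, y) \<in> edges K" and e2: "(y, z) \<in> edges K"
    and B: "is_block K r 2 2 B" "x \<in> B" and Bz: "is_block K r 2 2 Bz" "z \<in> Bz"
  shows "\<exists>Q. walk (skeleton K r 2 2) Q \<and> hd Q = B \<and> last Q = Bz \<and> length Q \<le> 2"
proof -
  have e1': "(y, x) \<in> edges K" and e2': "(z, y) \<in> edges K" using graph_sym[OF g] e1 e2 by auto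
  have v: "x \<in> verts K" "y \<in> verts K" "z \<in> verts K" using graph_ev[OF g e1] graph_ev[OF g e2] by auto
  have l1: "gdist K r y \<le> gdist K r x + 1" "gdist K r x \<le> gdist K r y + 1"
    using lev_step[OF g c r e1] lev_step[OF g c r e1'] by auto
  have l2: "gdist K r z \<le> gdist K r y + 1" "gdist K r y \<le> gdist K r z + 1"
    using lev_step[OF g c r e2] lev_step[OF g c r e2'] by auto
  define f where "f = (\<lambda>l::nat. (l + 1) div 2)"
  have cases3: "f (gdist K r x) = f (gdist K r z) \<or> f (gdist K r y) = f (gdist K r x) \<or> f (gdist K r y) = f (gdist K r z)"
    using lev3[OF l1(1) l1(2) l2(1) l2(2)] unfolding f_def by simp
  have Lx: "x \<in> layer K r 2 (int (f (gdist K r x)) - 1)" using layer2[OF v(1)] unfolding f_def .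
  have Ly: "y \<in> layer K r 2 (int (f (gdist K r y)) - 1)" using layer2[OF v(2)] unfolding f_def .
  have Lz: "z \<in> layer K r 2 (int (f (gdist K r z)) - 1)" using layer2[OF v(3)] unfolding f_def .
  have two: "(2::real) > 0" by simp
  have dxy: "real (gdist K x y) \<le> 2" using gdist_edge[OF e1 g] by simp
  have dzy: "real (gdist K z y) \<le> 2" using gdist_edge[OF e2' g] by simp
  from cases3 show ?thesis
  proof (elim disjE)
    assume h: "f (gdist K r x) = f (gdist K r z)"
    have "gdist K x z \<le> gdist K x y + gdist K y z" by (rule gdist_tri[OF c v])
    then have "real (gdist K x z) \<le> 2" using gdist_edge[OF e1 g] gdist_edge[OF e2 g] by simp
    moreover have "z \<in> layer K r 2 (int (f (gdist K r x)) - 1)" using Lz h by simp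
    ultimately have "z \<in> B" using block_same[OF two g Lx _ _ B] by blast
    then have "B = Bz" using block_uniq[OF two g B(1) Bz(1), of z] Bz(2) by blast
    then show ?thesis using B by (intro exI[of _ "[B]"]) (auto simp: skel_verts)
  next
    assume h: "f (gdist K r y) = f (gdist K r x)"
    then have "y \<in> layer K r 2 (int (f (gdist K r x)) - 1)" using Ly by simp
    then have "y \<in> B" using block_same[OF two g Lx _ dxy B] by blast
    then show ?thesis using one_edge22[OF g B(1) _ Bz e2] by blast
  next
    assume h: "f (gdist K r y) = f (gdist K r z)"
    then have "y \<in> layer K r 2 (int (f (gdist K r z)) - 1)" using Ly by simp
    then have "y \<in> Bz" using block_same[OF two g Lz _ dzy Bz] by blast
    then show ?thesis using one_edge22[OF g B(1) B(2) Bz(1) _ e1] by blast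
  qed
qed



lemma div_aux1: "(n::nat) \<ge> 2 \<Longrightarrow> 2 + ((n - 2 + 1) div 2 + 1) - 1 \<le> (n + 1) div 2 + 1"
  by presburger

lemma div_aux2: "2 * (((L::nat) + 3) div 2) \<le> L + 3"
  by presburger

lemma walk_blocks22:
  assumes g: "graph K" and c: "connected_graph K" and r: "r \<in> verts K"
  shows "walk K ws \<Longrightarrow> length ws = Suc n \<Longrightarrow> is_block K r 2 2 B \<Longrightarrow> hd ws \<in> B \<Longrightarrow>
    is_block K r 2 2 B' \<Longrightarrow> last ws \<in> B' \<Longrightarrow>
    \<exists>Q. walk (skeleton K r 2 2) Q \<and> hd Q = B \<and> last Q = B' \<and> length Q \<le> (n + 1) div 2 + 1"
proof (induction n arbitrary: ws B rule: less_induct)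
  case (less n)
  have two: "(2::real) > 0" by simp
  obtain a r1 where ws: "ws = a # r1" using less.prems(1) by (cases ws) (auto simp: walk_def)
  show ?case
  proof (cases r1)
    case Nil
    then have "a \<in> B" "a \<in> B'" using less.prems ws by auto
    then have "B = B'" using block_uniq[OF two g less.prems(3) less.prems(5)] by blast
    then show ?thesis using less.prems(3) by (intro exI[of _ "[B]"]) (auto simp: skel_verts)
  next
    case (Cons b r2)
    show ?thesis
    proof (cases r2)
      case Nil
      then have n1: "n = 1" using less.prems(2) ws Cons by simp
      have "(a, b) \<in> edges K" "a \<in> B" "b \<in> B'" using less.prems ws Cons Nil by auto
      then obtain Q where "walk (skeleton K r 2 2) Q \<and> hd Q = B \<and> last Q = B' \<and> length Q \<le> 2"
        using one_edge22[OF g less.prems(3) _ less.prems(5)] by blast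
      then show ?thesis using n1 by auto
    next
      case (Cons c r3)
      have e1: "(a, b) \<in> edges K" and e2: "(b, c) \<in> edges K" and w3: "walk K (c # r3)"
        using less.prems(1) ws \<open>r1 = b # r2\<close> Cons by auto
      have cv: "c \<in> verts K" using graph_ev[OF g e2] by blast
      obtain Bc where Bc: "is_block K r 2 2 Bc" "c \<in> Bc" using block_ex[OF two g cv, of r 2] by blast
      have aB: "a \<in> B" using less.prems ws by simp
      obtain Q1 where Q1: "walk (skeleton K r 2 2) Q1" "hd Q1 = B" "last Q1 = Bc" "length Q1 \<le> 2"
        using two_step22[OF g c r e1 e2 less.prems(3) aB Bc] by blast
      have n2: "n \<ge> 2" and ln: "length (c # r3) = Suc (n - 2)"
        using less.prems(2) ws \<open>r1 = b # r2\<close> Cons by auto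
      have "last (c # r3) \<in> B'" using less.prems(6) ws \<open>r1 = b # r2\<close> Cons by simp
      then obtain Q2 where Q2: "walk (skeleton K r 2 2) Q2" "hd Q2 = Bc" "last Q2 = B'"
          "length Q2 \<le> (n - 2 + 1) div 2 + 1"
        using less.IH[of "n - 2" "c # r3" Bc] n2 w3 ln Bc less.prems(5) by auto
      have j: "walk (skeleton K r 2 2) (Q1 @ tl Q2) \<and> hd (Q1 @ tl Q2) = B \<and> last (Q1 @ tl Q2) = B' \<and>
          length (Q1 @ tl Q2) = length Q1 + length Q2 - 1"
        using walk_join3[OF Q1(1) Q2(1)] Q1 Q2 by auto
      have "length Q1 + length Q2 - 1 \<le> 2 + ((n - 2 + 1) div 2 + 1) - 1" using Q1(4) Q2(4) by linarith
      also have "\<dots> \<le> (n + 1) div 2 + 1" by (rule div_aux1[OF n2])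
      finally show ?thesis using j by metis
    qed
  qed
qed

lemma key:
  assumes g: "graph K" and c: "connected_graph K" and r: "r \<in> verts K" and M: "M \<ge> 2"
    and rd: "r_disjoint (skeleton K r 2 2) M X Y"
    and X: "X \<subseteq> verts (skeleton K r 2 2)" and Y: "Y \<subseteq> verts (skeleton K r 2 2)"
    and X': "X' \<subseteq> verts K" "\<forall>a'\<in>X'. \<exists>W\<in>X. \<exists>a\<in>W. a = a' \<or> (a, a') \<in> edges K"
    and Y': "Y' \<subseteq> verts K" "\<forall>b'\<in>Y'. \<exists>W\<in>Y. \<exists>b\<in>W. b = b' \<or> (b, b') \<in> edges K"
  shows "r_disjoint K (M + M / 2 - 2) X' Y'"
  unfolding r_disjoint_def
proof (intro ballI)
  fix a' b' assume a': "a' \<in> X'" and b': "b' \<in> Y'"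
  obtain W1 a where W1: "W1 \<in> X" "a \<in> W1" "a = a' \<or> (a, a') \<in> edges K" using X'(2) a' by blast
  obtain W2 b where W2: "W2 \<in> Y" "b \<in> W2" "b = b' \<or> (b, b') \<in> edges K" using Y'(2) b' by blast
  have bW1: "is_block K r 2 2 W1" using X W1(1) by (auto simp: skel_verts)
  have bW2: "is_block K r 2 2 W2" using Y W2(1) by (auto simp: skel_verts)
  have av: "a \<in> verts K" using block_verts[OF bW1] W1(2) by blast
  have a'v: "a' \<in> verts K" using X'(1) a' by blast
  have b'v: "b' \<in> verts K" using Y'(1) b' by blast
  define L where "L = gdist K a' b'"
  obtain ws where ws: "walk K ws" "hd ws = a'" "last ws = b'" "length ws = Suc L"
    using conn_walk[OF c a'v b'v] unfolding L_def by blast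
  obtain w1 where w1: "walk K w1" "hd w1 = a" "last w1 = a'" "length w1 \<le> 2"
    using edge_walk[OF g av W1(3)] by blast
  have "b' = b \<or> (b', b) \<in> edges K" using W2(3) graph_sym[OF g] by blast
  then obtain w3 where w3: "walk K w3" "hd w3 = b'" "last w3 = b" "length w3 \<le> 2"
    using edge_walk[OF g b'v] by blast
  have j1: "walk K (w1 @ tl ws) \<and> hd (w1 @ tl ws) = a \<and> last (w1 @ tl ws) = b' \<and> length (w1 @ tl ws) \<le> L + 2"
    using walk_join3[OF w1(1) ws(1)] w1 ws by auto
  define vs where "vs = (w1 @ tl ws) @ tl w3"
  have j2: "walk K vs \<and> hd vs = a \<and> last vs = b \<and> length vs \<le> L + 3"
    using walk_join3[of K "w1 @ tl ws" w3] j1 w3 unfolding vs_def by auto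
  define n where "n = length vs - 1"
  have vsne: "vs \<noteq> []" using j2 by (simp add: walk_def)
  have ln: "length vs = Suc n" using vsne unfolding n_def by simp
  have nL: "n \<le> L + 2" using j2 unfolding n_def by linarith
  obtain Q where Q: "walk (skeleton K r 2 2) Q" "hd Q = W1" "last Q = W2" "length Q \<le> (n + 1) div 2 + 1"
    using walk_blocks22[OF g c r _ ln bW1 _ bW2] j2 W1(2) W2(2) by auto
  have "gdist (skeleton K r 2 2) W1 W2 \<le> length Q - 1" by (rule gdist_le[OF Q(1-3)])
  also have "\<dots> \<le> (n + 1) div 2" using Q(4) by simp
  also have "\<dots> \<le> (L + 3) div 2" using nL by (simp add: div_le_mono)
  finally have d: "gdist (skeleton K r 2 2) W1 W2 \<le> (L + 3) div 2" .
  have "M < real (gdist (skeleton K r 2 2) W1 W2)" using rd W1(1) W2(1) unfolding r_disjoint_def by blast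
  also have "\<dots> \<le> real ((L + 3) div 2)" using d by simp
  finally have m1: "M < real ((L + 3) div 2)" .
  have "real (2 * ((L + 3) div 2)) \<le> real (L + 3)" using div_aux2[of L] by (simp only: of_nat_le_iff)
  then have "2 * real ((L + 3) div 2) \<le> real L + 3" by simp
  then have "2 * M < real L + 3" using m1 by linarith
  then show "M + M / 2 - 2 < real (gdist K a' b')" using M unfolding L_def by linarith
qed



lemma sub_walk: "subgraph K X \<Longrightarrow> walk X ws \<Longrightarrow> walk K ws \<and> set ws \<subseteq> verts X"
  unfolding subgraph_def walk_alt by (auto elim!: successively_mono)

definition ind :: "'a graph \<Rightarrow> 'a set \<Rightarrow> 'a graph" where
  "ind K S = (S, {(a, b). (a, b) \<in> edges K \<and> a \<in> S \<and> b \<in> S})"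

lemma ind_verts: "verts (ind K S) = S" unfolding ind_def verts_def by simp
lemma ind_edges: "edges (ind K S) = {(a, b). (a, b) \<in> edges K \<and> a \<in> S \<and> b \<in> S}"
  unfolding ind_def edges_def by simp

lemma ind_walk: "walk K ws \<Longrightarrow> set ws \<subseteq> S \<Longrightarrow> walk (ind K S) ws"
  unfolding walk_alt ind_verts ind_edges
  by (auto elim!: successively_mono)

lemma ind_sub: "graph K \<Longrightarrow> S \<subseteq> verts K \<Longrightarrow> subgraph K (ind K S)"
  unfolding subgraph_def graph_def ind_verts ind_edges sym_def irrefl_def by auto

lemma near_lift: "a' \<in> \<Union>(lift K ` X) \<Longrightarrow> \<exists>W\<in>X. \<exists>a\<in>W. a = a' \<or> (a, a') \<in> edges K"
  unfolding lift_def by blast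

theorem lemma7:
  fixes G :: "'a graph" and H :: "'b graph" and x0 :: 'a and lam k M :: real
  assumes "graph G" and "connected_graph G" and "unbounded_graph G"
    and "coarsely_bottlenecked G"
    and "x0 \<in> verts G" and "lam \<ge> 1" and "k \<ge> 1"
    and "M \<ge> 4"
    and "graph H"
    and "fat_minor H (skeleton22 G x0 lam k) M"
  shows "fat_minor H (skeleton G x0 lam k) (M + M / 2 - 2)"
proof -
  define \<Gamma> where "\<Gamma> = skeleton G x0 lam k"
  define r where "r = skel_root G x0 lam k"
  have lam: "lam > 0" using assms(6) by linarith
  have g: "graph \<Gamma>" unfolding \<Gamma>_def by (rule skel_graph[OF assms(1)])
  have c: "connected_graph \<Gamma>" unfolding \<Gamma>_def by (rule skel_conn[OF lam assms(1) assms(2)])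
  have rv: "r \<in> verts \<Gamma>" using skel_root_block[OF lam assms(1) assms(5), of k]
    unfolding \<Gamma>_def r_def skel_verts by simp
  have M2: "M \<ge> 2" using assms(8) by linarith
  have s22: "skeleton22 G x0 lam k = skeleton \<Gamma> r 2 2" unfolding skeleton22_def \<Gamma>_def r_def ..
  define T where "T = skeleton \<Gamma> r 2 2"
  obtain Bs :: "'b \<Rightarrow> 'a set set graph" and P :: "'b set \<Rightarrow> 'a set set list" where
    m1: "\<forall>v\<in>verts H. subgraph T (Bs v) \<and> connected_graph (Bs v)" and
    m2: "\<forall>e\<in>uedges H. gpath T (P e) \<and>
        (\<exists>u v. e = {u, v} \<and> (u, v) \<in> edges H \<and> hd (P e) \<in> verts (Bs u) \<and> last (P e) \<in> verts (Bs v))" and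
    m3: "\<forall>u\<in>verts H. \<forall>v\<in>verts H. u \<noteq> v \<longrightarrow> r_disjoint T M (verts (Bs u)) (verts (Bs v))" and
    m4: "\<forall>e\<in>uedges H. \<forall>e'\<in>uedges H. e \<noteq> e' \<longrightarrow> r_disjoint T M (set (P e)) (set (P e'))" and
    m5: "\<forall>v\<in>verts H. \<forall>e\<in>uedges H. v \<notin> e \<longrightarrow> r_disjoint T M (verts (Bs v)) (set (P e))"
    using assms(10) unfolding fat_minor_def s22 T_def[symmetric] by (elim exE conjE) (rule that)
  define S where "S v = \<Union>(lift \<Gamma> ` verts (Bs v))" for v
  define Bs' where "Bs' v = ind \<Gamma> (S v)" for v

  have BsT: "verts (Bs v) \<subseteq> verts T" if "v \<in> verts H" for v
    using m1 that unfolding subgraph_def by blast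
  have blk: "is_block \<Gamma> r 2 2 W" if "W \<in> verts T" for W
    using that unfolding T_def skel_verts by simp
  have Sv: "S v \<subseteq> verts \<Gamma>" if "v \<in> verts H" for v
  proof
    fix y assume "y \<in> S v"
    then obtain W where W: "W \<in> verts (Bs v)" "y \<in> lift \<Gamma> W" unfolding S_def by blast
    have "W \<subseteq> verts \<Gamma>" using block_verts[OF blk] BsT[OF that] W(1) by blast
    then show "y \<in> verts \<Gamma>" using lift_verts[OF g] W(2) by blast
  qed
  have Snear: "\<forall>a'\<in>S v. \<exists>W\<in>verts (Bs v). \<exists>a\<in>W. a = a' \<or> (a, a') \<in> edges \<Gamma>" for v
    unfolding S_def using near_lift[of _ \<Gamma> "verts (Bs v)"] by blast

  have part1: "subgraph \<Gamma> (Bs' v) \<and> connected_graph (Bs' v)" if v: "v \<in> verts H" for v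
  proof
    have m1v: "subgraph T (Bs v)" "connected_graph (Bs v)" using m1 v by auto
    show "subgraph \<Gamma> (Bs' v)" unfolding Bs'_def by (rule ind_sub[OF g Sv[OF v]])
    show "connected_graph (Bs' v)" unfolding connected_graph_def
    proof (intro conjI ballI)
      have m1v: "connected_graph (Bs v)" using m1 v by auto
      obtain W where W: "W \<in> verts (Bs v)" using m1v unfolding connected_graph_def by blast
      obtain x where "x \<in> W" using block_ne[OF blk] BsT[OF v] W by blast
      then have "x \<in> S v" unfolding S_def using W lift_sub[of W \<Gamma>] by blast
      then show "verts (Bs' v) \<noteq> {}" unfolding Bs'_def ind_verts by blast
    next
      fix a b assume a: "a \<in> verts (Bs' v)" and b: "b \<in> verts (Bs' v)"
      obtain Wa where Wa: "Wa \<in> verts (Bs v)" "a \<in> lift \<Gamma> Wa" using a unfolding Bs'_def ind_verts S_def by blast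
      obtain Wb where Wb: "Wb \<in> verts (Bs v)" "b \<in> lift \<Gamma> Wb" using b unfolding Bs'_def ind_verts S_def by blast
      have m1v: "subgraph T (Bs v)" "connected_graph (Bs v)" using m1 v by auto
      obtain Q where Q: "walk (Bs v) Q" "hd Q = Wa" "last Q = Wb"
        using m1v(2) Wa(1) Wb(1) unfolding connected_graph_def by blast
      have QT: "walk T Q" "set Q \<subseteq> verts (Bs v)" using sub_walk[OF m1v(1) Q(1)] by auto
      obtain ws where ws: "walk \<Gamma> ws" "hd ws = a" "last ws = b" "set ws \<subseteq> \<Union>(lift \<Gamma> ` set Q)"
        using lift_chain[OF g c, of r Q a b] QT(1) Q(2,3) Wa(2) Wb(2) unfolding T_def by blast
      have "set ws \<subseteq> S v" using ws(4) QT(2) unfolding S_def by blast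
      then have "walk (Bs' v) ws" unfolding Bs'_def using ind_walk[OF ws(1)] by blast
      then show "\<exists>xs. walk (Bs' v) xs \<and> hd xs = a \<and> last xs = b" using ws by blast
    qed
  qed

  have part2: "\<exists>ys. gpath \<Gamma> ys \<and> set ys \<subseteq> \<Union>(lift \<Gamma> ` set (P e)) \<and>
      (\<exists>u v. e = {u, v} \<and> (u, v) \<in> edges H \<and> hd ys \<in> verts (Bs' u) \<and> last ys \<in> verts (Bs' v))"
    if e: "e \<in> uedges H" for e
  proof -
    have m2e: "gpath T (P e) \<and>
        (\<exists>u v. e = {u, v} \<and> (u, v) \<in> edges H \<and> hd (P e) \<in> verts (Bs u) \<and> last (P e) \<in> verts (Bs v))"
      using m2 e by blast
    then have gp: "gpath T (P e)" by blast
    obtain u v where uv: "e = {u, v}" "(u, v) \<in> edges H" "hd (P e) \<in> verts (Bs u)" "last (P e) \<in> verts (Bs v)"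
      using m2e by blast
    have uvH: "u \<in> verts H" "v \<in> verts H" using assms(9) uv(2) unfolding graph_def by auto
    have wP: "walk T (P e)" using gp unfolding gpath_def by blast
    have hT: "hd (P e) \<in> verts T" using BsT[OF uvH(1)] uv(3) by blast
    have lT: "last (P e) \<in> verts T" using BsT[OF uvH(2)] uv(4) by blast
    obtain a where a: "a \<in> hd (P e)" using block_ne[OF blk[OF hT]] by blast
    obtain b where b: "b \<in> last (P e)" using block_ne[OF blk[OF lT]] by blast
    have al: "a \<in> lift \<Gamma> (hd (P e))" using a lift_sub[of "hd (P e)" \<Gamma>] by blast
    have bl: "b \<in> lift \<Gamma> (last (P e))" using b lift_sub[of "last (P e)" \<Gamma>] by blast
    obtain ws where ws: "walk \<Gamma> ws" "hd ws = a" "last ws = b" "set ws \<subseteq> \<Union>(lift \<Gamma> ` set (P e))"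
      using lift_chain[OF g c, of r "P e" a b] wP al bl unfolding T_def by blast
    obtain ys where ys: "gpath \<Gamma> ys" "hd ys = a" "last ys = b" "set ys \<subseteq> set ws"
      using walk_to_path[OF ws(1)] ws by auto
    have "a \<in> S u" unfolding S_def using uv(3) al by blast
    moreover have "b \<in> S v" unfolding S_def using uv(4) bl by blast
    ultimately have "hd ys \<in> verts (Bs' u)" "last ys \<in> verts (Bs' v)"
      unfolding Bs'_def ind_verts using ys by auto
    moreover have "set ys \<subseteq> \<Union>(lift \<Gamma> ` set (P e))" using ys(4) ws(4) by (rule subset_trans)
    ultimately show ?thesis using ys(1) uv(1,2) by (intro exI[of _ ys]) blast
  qed
  have allp: "\<forall>e\<in>uedges H. \<exists>ys. gpath \<Gamma> ys \<and> set ys \<subseteq> \<Union>(lift \<Gamma> ` set (P e)) \<and>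
      (\<exists>u v. e = {u, v} \<and> (u, v) \<in> edges H \<and> hd ys \<in> verts (Bs' u) \<and> last ys \<in> verts (Bs' v))"
    using part2 by blast
  obtain P' where P': "\<forall>e\<in>uedges H. gpath \<Gamma> (P' e) \<and> set (P' e) \<subseteq> \<Union>(lift \<Gamma> ` set (P e)) \<and>
      (\<exists>u v. e = {u, v} \<and> (u, v) \<in> edges H \<and> hd (P' e) \<in> verts (Bs' u) \<and> last (P' e) \<in> verts (Bs' v))"
    using bchoice[OF allp] by (elim exE) (rule that)

  have PT: "set (P e) \<subseteq> verts T" if "e \<in> uedges H" for e
  proof -
    have "gpath T (P e)" using m2 that by blast
    then show ?thesis unfolding gpath_def walk_def by blast
  qed
  have P'v: "set (P' e) \<subseteq> verts \<Gamma>" if "e \<in> uedges H" for e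
  proof -
    have "gpath \<Gamma> (P' e)" using P' that by blast
    then show ?thesis unfolding gpath_def walk_def by blast
  qed
  have P'near: "\<forall>a'\<in>set (P' e). \<exists>W\<in>set (P e). \<exists>a\<in>W. a = a' \<or> (a, a') \<in> edges \<Gamma>" if "e \<in> uedges H" for e
  proof
    fix a' assume a': "a' \<in> set (P' e)"
    have "set (P' e) \<subseteq> \<Union>(lift \<Gamma> ` set (P e))" using P' that by blast
    then show "\<exists>W\<in>set (P e). \<exists>a\<in>W. a = a' \<or> (a, a') \<in> edges \<Gamma>" using a' near_lift[of a' \<Gamma> "set (P e)"] by blast
  qed

  have part3: "r_disjoint \<Gamma> (M + M / 2 - 2) (verts (Bs' u)) (verts (Bs' v))"
    if "u \<in> verts H" "v \<in> verts H" "u \<noteq> v" for u v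
  proof -
    have rd: "r_disjoint (skeleton \<Gamma> r 2 2) M (verts (Bs u)) (verts (Bs v))" using m3 that unfolding T_def by blast
    show ?thesis unfolding Bs'_def ind_verts
      by (rule key[OF g c rv M2 rd BsT[OF that(1), unfolded T_def] BsT[OF that(2), unfolded T_def]
        Sv[OF that(1)] Snear Sv[OF that(2)] Snear])
  qed
  have part4: "r_disjoint \<Gamma> (M + M / 2 - 2) (set (P' e)) (set (P' e'))"
    if "e \<in> uedges H" "e' \<in> uedges H" "e \<noteq> e'" for e e'
  proof -
    have rd: "r_disjoint (skeleton \<Gamma> r 2 2) M (set (P e)) (set (P e'))" using m4 that unfolding T_def by blast
    show ?thesis
      by (rule key[OF g c rv M2 rd PT[OF that(1), unfolded T_def] PT[OF that(2), unfolded T_def]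
        P'v[OF that(1)] P'near[OF that(1)] P'v[OF that(2)] P'near[OF that(2)]])
  qed
  have part5: "r_disjoint \<Gamma> (M + M / 2 - 2) (verts (Bs' v)) (set (P' e))"
    if "v \<in> verts H" "e \<in> uedges H" "v \<notin> e" for v e
  proof -
    have rd: "r_disjoint (skeleton \<Gamma> r 2 2) M (verts (Bs v)) (set (P e))" using m5 that unfolding T_def by blast
    show ?thesis unfolding Bs'_def ind_verts
      by (rule key[OF g c rv M2 rd BsT[OF that(1), unfolded T_def] PT[OF that(2), unfolded T_def]
        Sv[OF that(1)] Snear P'v[OF that(2)] P'near[OF that(2)]])
  qed

  show ?thesis unfolding fat_minor_def \<Gamma>_def[symmetric]
    apply (rule exI[of _ Bs'], rule exI[of _ P'])
    apply (intro conjI)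
    subgoal by (intro ballI) (rule part1)
    subgoal using P' by blast
    subgoal by (intro ballI impI) (rule part3)
    subgoal by (intro ballI impI) (rule part4)
    subgoal by (intro ballI impI) (rule part5)
    done
qed

end
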